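(* Let $k\ge1$ and $c\in\mathcal{S}_k^\alpha\setminus\{\mathbf{0}\}$. Then $w_{Hom}(c)=q^{s(k+1)-2}(q-1)$.
   Context: Let $R$ be a finite commutative chain ring with maximal ideal $\langle\gamma\rangle$, nilpotency index $s$ and residue field $R/\langle\gamma\rangle\cong\mathbb{F}_q$. Fix coset representatives $T=\{e_0,\dots,e_{q-1}\}$ with $e_0=0,e_1=1$, ordered $e_0<\dots<e_{q-1}$; each $r\in R$ is uniquely $\sum_{i=0}^{s-1}r_i\gamma^i$, $r_i\in T$; order $R$ by $x>y$ iff $x_i>y_i$ in $T$ for the largest $i$ with $x_i\neq y_i$; list $R=\{\rho_0,\dots,\rho_{q^s-1}\}$ increasingly. $\mathbf{a}^{(m)}$ is the constant vector of length $m$. Define $G_1^\alpha=(\rho_0\ \cdots\ \rho_{q^s-1})$ and, for $k>1$, $G_k^\alpha$ as the $k\times q^{sk}$ matrix of $q^s$ column blocks, the $j$-th having first row $\boldsymbol{\rho_j}^{(q^{s(k-1)})}$ and $G_{k-1}^\alpha$ below. $\mathcal{S}_k^\alpha$ is the $R$-submodule of $R^{q^{sk}}$ generated by the rows of $G_k^\alpha$. Homogeneous weight: for $x\in R$, $w_{Hom}(x)=0$ if $x=0$; $w_{Hom}(x)=(q-1)q^{s-2}$ if $x\neq0$ and $x\notin\langle\gamma^{s-1}\rangle$; $w_{Hom}(x)=q^{s-1}$ if $x\neq0$ and $x\in\langle\gamma^{s-1}\rangle$; extended to $R^n$ by summing over coordinates. *)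

theory Defs
  imports Main
begin

definition is_ideal :: "'a::comm_ring_1 set \<Rightarrow> bool" where
  "is_ideal I \<longleftrightarrow> 0 \<in> I \<and> (\<forall>x\<in>I. \<forall>y\<in>I. x + y \<in> I) \<and> (\<forall>r. \<forall>x\<in>I. r * x \<in> I)"

definition pideal :: "'a::comm_ring_1 \<Rightarrow> 'a set" where
  "pideal g = {g * x | x. True}"

definition maximal_ideal :: "'a::comm_ring_1 set \<Rightarrow> bool" where
  "maximal_ideal M \<longleftrightarrow> is_ideal M \<and> M \<noteq> UNIV \<and>
     (\<forall>J. is_ideal J \<and> M \<subseteq> J \<longrightarrow> J = M \<or> J = UNIV)"

definition chain_ring :: "'a::comm_ring_1 itself \<Rightarrow> bool" where
  "chain_ring _ \<longleftrightarrow> (\<forall>I J :: 'a set. is_ideal I \<and> is_ideal J \<longrightarrow> I \<subseteq> J \<or> J \<subseteq> I)"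

text \<open>Standing data: R = 'a a finite commutative chain ring with maximal ideal generated
  by g, nilpotency index s, residue field with q elements, and coset representatives
  e 0, ..., e (q-1) (indexed in the fixed order e_0 < ... < e_(q-1)), e 0 = 0, e 1 = 1.\<close>
definition chain_ring_setup :: "'a::{comm_ring_1,finite} \<Rightarrow> nat \<Rightarrow> nat \<Rightarrow> (nat \<Rightarrow> 'a) \<Rightarrow> bool" where
  "chain_ring_setup g s q e \<longleftrightarrow>
     chain_ring TYPE('a) \<and>
     maximal_ideal (pideal g) \<and>
     s \<ge> 1 \<and> g ^ s = 0 \<and> g ^ (s - 1) \<noteq> 0 \<and>
     (\<forall>x::'a. \<exists>!i. i < q \<and> x - e i \<in> pideal g) \<and>
     e 0 = 0 \<and> e 1 = 1"

definition digits :: "'a::comm_ring_1 \<Rightarrow> nat \<Rightarrow> nat \<Rightarrow> (nat \<Rightarrow> 'a) \<Rightarrow> 'a \<Rightarrow> nat \<Rightarrow> nat" where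
  "digits g s q e r = (THE d. (\<forall>i<s. d i < q) \<and> (\<forall>i\<ge>s. d i = 0) \<and>
                               r = (\<Sum>i<s. e (d i) * g ^ i))"

definition rless :: "'a::comm_ring_1 \<Rightarrow> nat \<Rightarrow> nat \<Rightarrow> (nat \<Rightarrow> 'a) \<Rightarrow> 'a \<Rightarrow> 'a \<Rightarrow> bool" where
  "rless g s q e x y \<longleftrightarrow>
     (\<exists>i<s. digits g s q e x i < digits g s q e y i \<and>
            (\<forall>j. i < j \<and> j < s \<longrightarrow> digits g s q e x j = digits g s q e y j))"

text \<open>rho n: the n-th element of R in increasing order (counting from 0).\<close>
definition rho :: "'a::{comm_ring_1,finite} \<Rightarrow> nat \<Rightarrow> nat \<Rightarrow> (nat \<Rightarrow> 'a) \<Rightarrow> nat \<Rightarrow> 'a" where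
  "rho g s q e n = (THE x. card {y. rless g s q e y x} = n)"

text \<open>Entry (row i, column j) of G_k, rows/columns 0-indexed; k = 0 is unused.\<close>
fun Gmat :: "'a::{comm_ring_1,finite} \<Rightarrow> nat \<Rightarrow> nat \<Rightarrow> (nat \<Rightarrow> 'a) \<Rightarrow> nat \<Rightarrow> nat \<Rightarrow> nat \<Rightarrow> 'a" where
  "Gmat g s q e 0 i j = 0"
| "Gmat g s q e (Suc 0) i j = rho g s q e j"
| "Gmat g s q e (Suc (Suc k)) i j =
     (if i = 0 then rho g s q e (j div (q ^ s) ^ Suc k)
      else Gmat g s q e (Suc k) (i - 1) (j mod (q ^ s) ^ Suc k))"

definition Grow :: "'a::{comm_ring_1,finite} \<Rightarrow> nat \<Rightarrow> nat \<Rightarrow> (nat \<Rightarrow> 'a) \<Rightarrow> nat \<Rightarrow> nat \<Rightarrow> 'a list" where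
  "Grow g s q e k i = map (Gmat g s q e k i) [0..<q ^ (s * k)]"

definition Scode :: "'a::{comm_ring_1,finite} \<Rightarrow> nat \<Rightarrow> nat \<Rightarrow> (nat \<Rightarrow> 'a) \<Rightarrow> nat \<Rightarrow> 'a list set" where
  "Scode g s q e k = {map (\<lambda>j. \<Sum>i<k. a i * Gmat g s q e k i j) [0..<q ^ (s * k)] | a. True}"

definition wHom :: "'a::comm_ring_1 \<Rightarrow> nat \<Rightarrow> nat \<Rightarrow> 'a \<Rightarrow> nat" where
  "wHom g s q x = (if x = 0 then 0
                   else if x \<notin> pideal (g ^ (s - 1)) then (q - 1) * q ^ (s - 2)
                   else q ^ (s - 1))"

definition wHom_vec :: "'a::comm_ring_1 \<Rightarrow> nat \<Rightarrow> nat \<Rightarrow> 'a list \<Rightarrow> nat" where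
  "wHom_vec g s q c = sum_list (map (wHom g s q) c)"

end

theory Submission
  imports Defs "HOL-Library.Function_Algebras"
begin


lemma fiber_sum:
  fixes \<phi> :: "'b::ab_group_add \<Rightarrow> 'c::ab_group_add" and F :: "'c \<Rightarrow> nat"
  assumes fin: "finite A" and cl: "\<And>x y. x \<in> A \<Longrightarrow> y \<in> A \<Longrightarrow> x - y \<in> A"
    and hom: "\<And>x y. x \<in> A \<Longrightarrow> y \<in> A \<Longrightarrow> \<phi> (x - y) = \<phi> x - \<phi> y"
  shows "sum (\<lambda>x. F (\<phi> x)) A = card {x\<in>A. \<phi> x = 0} * sum F (\<phi> ` A)"
proof -
  have fib: "card {x\<in>A. \<phi> x = \<phi> x0} = card {x\<in>A. \<phi> x = 0}" if x0: "x0 \<in> A" for x0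
  proof (rule bij_betw_same_card[of "\<lambda>x. x - x0"], rule bij_betw_byWitness[where f'="\<lambda>x. x + x0"])
    have z: "0 \<in> A" using cl[OF x0 x0] by simp
    have p0: "\<phi> 0 = 0" using hom[OF x0 x0] by simp
    have nx: "- x0 \<in> A" using cl[OF z x0] by simp
    have pn: "\<phi> (- x0) = - \<phi> x0" using hom[OF z x0] p0 by simp
    show "\<forall>a\<in>{x \<in> A. \<phi> x = \<phi> x0}. a - x0 + x0 = a" by simp
    show "\<forall>a'\<in>{x \<in> A. \<phi> x = 0}. a' + x0 - x0 = a'" by simp
    show "(\<lambda>x. x - x0) ` {x \<in> A. \<phi> x = \<phi> x0} \<subseteq> {x \<in> A. \<phi> x = 0}"
      using cl hom x0 by auto
    show "(\<lambda>x. x + x0) ` {x \<in> A. \<phi> x = 0} \<subseteq> {x \<in> A. \<phi> x = \<phi> x0}"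
    proof clarify
      fix y assume y: "y \<in> A" "\<phi> y = 0"
      have "y + x0 = y - (- x0)" by simp
      then show "y + x0 \<in> A \<and> \<phi> (y + x0) = \<phi> x0"
        using cl[OF y(1) nx] hom[OF y(1) nx] y pn by simp
    qed
  qed
  have "sum (\<lambda>x. F (\<phi> x)) A = sum (\<lambda>z. sum (\<lambda>x. F (\<phi> x)) {x. x \<in> A \<and> \<phi> x = z}) (\<phi> ` A)"
    by (rule sum.image_gen[OF fin])
  also have "\<dots> = sum (\<lambda>z. card {x\<in>A. \<phi> x = 0} * F z) (\<phi> ` A)"
  proof (rule sum.cong, simp)
    fix z assume "z \<in> \<phi> ` A"
    then obtain x0 where x0: "x0 \<in> A" "z = \<phi> x0" by auto
    have "sum (\<lambda>x. F (\<phi> x)) {x. x \<in> A \<and> \<phi> x = z} = sum (\<lambda>x. F z) {x. x \<in> A \<and> \<phi> x = z}"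
      by (rule sum.cong) auto
    also have "\<dots> = card {x\<in>A. \<phi> x = z} * F z" by simp
    finally show "sum (\<lambda>x. F (\<phi> x)) {x. x \<in> A \<and> \<phi> x = z} = card {x\<in>A. \<phi> x = 0} * F z"
      using fib[OF x0(1)] x0(2) by simp
  qed
  also have "\<dots> = card {x\<in>A. \<phi> x = 0} * sum F (\<phi> ` A)" by (simp add: sum_distrib_left)
  finally show ?thesis .
qed

lemma fiber_card:
  fixes \<phi> :: "'b::ab_group_add \<Rightarrow> 'c::ab_group_add"
  assumes fin: "finite A" and cl: "\<And>x y. x \<in> A \<Longrightarrow> y \<in> A \<Longrightarrow> x - y \<in> A"
    and hom: "\<And>x y. x \<in> A \<Longrightarrow> y \<in> A \<Longrightarrow> \<phi> (x - y) = \<phi> x - \<phi> y"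
  shows "card A = card {x\<in>A. \<phi> x = 0} * card (\<phi> ` A)"
  using fiber_sum[OF assms, of "\<lambda>_. 1"] by simp

lemma pideal_iff: "x \<in> pideal y \<longleftrightarrow> (\<exists>z. x = y * z)"
  by (auto simp: pideal_def)

lemma pideal_add: "x \<in> pideal y \<Longrightarrow> x' \<in> pideal y \<Longrightarrow> x + x' \<in> pideal y"
  by (auto simp: pideal_iff) (metis distrib_left)

lemma pideal_diff: "x \<in> pideal y \<Longrightarrow> x' \<in> pideal y \<Longrightarrow> x - x' \<in> pideal y"
  by (auto simp: pideal_iff) (metis right_diff_distrib)

lemma pideal_mult: "x \<in> pideal y \<Longrightarrow> r * x \<in> pideal y"
  by (auto simp: pideal_iff) (metis mult.left_commute)

lemma pideal_self: "y * z \<in> pideal y"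
  by (auto simp: pideal_iff)

lemma pideal_0: "0 \<in> pideal y"
  unfolding pideal_iff by (rule exI[of _ 0]) simp

lemma pideal_pow_mono: "b \<le> a \<Longrightarrow> x \<in> pideal (g ^ a) \<Longrightarrow> x \<in> pideal (g ^ b)"
  by (auto simp: pideal_iff) (metis le_add_diff_inverse mult.assoc power_add)

lemma is_ideal_pideal: "is_ideal (pideal y)"
  by (simp add: is_ideal_def pideal_0 pideal_add pideal_mult)

locale crs =
  fixes g :: "'a::{comm_ring_1,finite}" and s q :: nat and e :: "nat \<Rightarrow> 'a"
  assumes hsetup: "chain_ring_setup g s q e"
begin

lemma s1: "s \<ge> 1" and gs: "g ^ s = 0" and gs1: "g ^ (s - 1) \<noteq> 0"
  and reps: "\<And>x. \<exists>!i. i < q \<and> x - e i \<in> pideal g" and e0: "e 0 = 0" and e1: "e 1 = 1"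
  and chain: "chain_ring TYPE('a)" and maxi: "maximal_ideal (pideal g)"
  using hsetup by (auto simp: chain_ring_setup_def)

lemma nonunit_in: "\<not> x dvd 1 \<Longrightarrow> x \<in> pideal g"
proof -
  assume nu: "\<not> x dvd 1"
  have "pideal x \<subseteq> pideal g \<or> pideal g \<subseteq> pideal x"
    using chain is_ideal_pideal unfolding chain_ring_def by blast
  then show ?thesis
  proof
    assume "pideal x \<subseteq> pideal g"
    moreover have "x \<in> pideal x" using pideal_self[of x 1] by simp
    ultimately show ?thesis by auto
  next
    assume h: "pideal g \<subseteq> pideal x"
    then have "pideal x = pideal g \<or> pideal x = UNIV"
      using maxi is_ideal_pideal unfolding maximal_ideal_def by blast
    moreover have "pideal x \<noteq> UNIV"
    proof
      assume "pideal x = UNIV"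
      then have "1 \<in> pideal x" by simp
      then show False using nu by (auto simp: pideal_iff dvd_def)
    qed
    moreover have "x \<in> pideal x" using pideal_self[of x 1] by simp
    ultimately show ?thesis by auto
  qed
qed

lemma q2: "q \<ge> 2"
proof (rule ccontr)
  assume "\<not> q \<ge> 2"
  moreover have "q \<noteq> 0" using reps[of 0] by auto
  moreover have "pideal g \<noteq> UNIV" using maxi by (simp add: maximal_ideal_def)
  then obtain x where x: "x \<notin> pideal g" by auto
  ultimately have "q = 1" by simp
  then have "x - e 0 \<in> pideal g" using reps[of x] by auto
  then show False using x e0 by simp
qed

lemma e_inj:
  assumes "i < q" "i' < q" "e i - e i' \<in> pideal g" shows "i = i'"
proof -
  have "e i - e i \<in> pideal g" using pideal_0[of g] by simp
  then show ?thesis using reps[of "e i"] assms by blast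
qed

lemma g_pow_zero: "g ^ m = 0 \<Longrightarrow> m \<ge> s"
proof (rule ccontr)
  assume a: "g ^ m = 0" and b: "\<not> m \<ge> s"
  from b have "g ^ (s - 1) = g ^ m * g ^ (s - 1 - m)"
    by (simp flip: power_add)
  then show False using gs1 a by simp
qed

lemma unit_cancel: fixes u y :: 'a assumes "u dvd 1" "y * u = 0" shows "y = 0"
proof -
  obtain v where v: "1 = u * v" using assms(1) by (auto simp: dvd_def)
  have "y = y * (u * v)" using v by simp
  also have "\<dots> = (y * u) * v" by (simp add: mult.assoc)
  finally show ?thesis using assms(2) by simp
qed

lemma factor: "x \<noteq> 0 \<Longrightarrow> \<exists>t<s. \<exists>u. u dvd 1 \<and> x = g ^ t * u"
proof -
  assume x: "x \<noteq> 0"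
  have "\<forall>n. (\<exists>t<n. \<exists>u. u dvd 1 \<and> x = g ^ t * u) \<or> (\<exists>y. x = g ^ n * y)" (is "\<forall>n. ?P n")
  proof
    fix n show "?P n"
    proof (induction n)
      case 0 then show ?case by simp
    next
      case (Suc n)
      then show ?case
      proof
        assume "\<exists>t<n. \<exists>u. u dvd 1 \<and> x = g ^ t * u"
        then show ?case using less_SucI by blast
      next
        assume "\<exists>y. x = g ^ n * y"
        then obtain y where y: "x = g ^ n * y" by auto
        show ?case
        proof (cases "y dvd 1")
          case True then show ?thesis using y by blast
        next
          case False
          then obtain z where "y = g * z" using nonunit_in pideal_iff by blast
          then have "x = g ^ Suc n * z" using y by (simp add: mult.assoc)
          then show ?thesis by blast
        qed
      qed
    qed
  qed
  then have "?P s" by blast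
  then show ?thesis
  proof
    assume "\<exists>y. x = g ^ s * y"
    then show ?thesis using gs x by auto
  qed
qed

lemma ann: "g * x = 0 \<Longrightarrow> x \<in> pideal (g ^ (s - 1))"
proof (cases "x = 0")
  case True then show ?thesis by (simp add: pideal_0)
next
  case False
  assume gx: "g * x = 0"
  obtain t u where tu: "t < s" "u dvd 1" "x = g ^ t * u" using factor[OF False] by auto
  then have "g ^ Suc t * u = 0" using gx by (simp add: mult.assoc)
  then have "g ^ Suc t = 0" using unit_cancel tu(2) by blast
  then have "s \<le> Suc t" by (rule g_pow_zero)
  then have "t = s - 1" using tu(1) by simp
  then show ?thesis using tu pideal_self by blast
qed

end


lemma sum_Suc_expand:
  fixes g :: "'a::comm_ring_1"
  shows "(\<Sum>i<Suc n. e (d i) * g ^ i) = e (d 0) + g * (\<Sum>i<n. e (d (Suc i)) * g ^ i)"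
  by (subst sum.lessThan_Suc_shift) (simp add: sum_distrib_left mult_ac)

context crs
begin

lemma gpow_s: "g ^ s = g * g ^ (s - 1)"
  using s1 by (cases s) simp_all

lemma top_ideal: "pideal (g ^ (s - 1)) = (\<lambda>i. g ^ (s - 1) * e i) ` {..<q}"
proof
  show "pideal (g ^ (s - 1)) \<subseteq> (\<lambda>i. g ^ (s - 1) * e i) ` {..<q}"
  proof
    fix x assume "x \<in> pideal (g ^ (s - 1))"
    then obtain y where y: "x = g ^ (s - 1) * y" by (auto simp: pideal_iff)
    obtain i where i: "i < q" "y - e i \<in> pideal g" using reps[of y] by blast
    then obtain z where z: "y - e i = g * z" by (auto simp: pideal_iff)
    have "x = g ^ (s - 1) * (e i + g * z)" using y z by (simp add: algebra_simps)
    also have "\<dots> = g ^ (s - 1) * e i + g ^ s * z"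
      unfolding gpow_s by (simp add: algebra_simps)
    also have "\<dots> = g ^ (s - 1) * e i" using gs by simp
    finally show "x \<in> (\<lambda>i. g ^ (s - 1) * e i) ` {..<q}" using i by auto
  qed
  show "(\<lambda>i. g ^ (s - 1) * e i) ` {..<q} \<subseteq> pideal (g ^ (s - 1))"
    using pideal_self by blast
qed

lemma top_card: "card (pideal (g ^ (s - 1))) = q"
proof -
  have "inj_on (\<lambda>i. g ^ (s - 1) * e i) {..<q}"
  proof (rule inj_onI, rule ccontr)
    fix i i' assume ii: "i \<in> {..<q}" "i' \<in> {..<q}" "g ^ (s - 1) * e i = g ^ (s - 1) * e i'" "i \<noteq> i'"
    then have "e i - e i' \<notin> pideal g" using e_inj by auto
    then have u: "(e i - e i') dvd 1" using nonunit_in by blast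
    have "g ^ (s - 1) * (e i - e i') = 0" using ii(3) by (simp add: right_diff_distrib)
    then have "g ^ (s - 1) = 0" using unit_cancel[OF u] by blast
    then show False using gs1 by simp
  qed
  then show ?thesis unfolding top_ideal by (simp add: card_image)
qed

lemma ideal_card: "m \<le> s \<Longrightarrow> card (pideal (g ^ (s - m))) = q ^ m"
proof (induction m)
  case 0
  have "pideal (g ^ s) = {0}" using gs by (auto simp: pideal_iff)
  then show ?case by simp
next
  case (Suc m)
  define j where "j = s - Suc m"
  have jm: "Suc j = s - m" "j \<le> s - 1" using Suc.prems by (auto simp: j_def)
  let ?A = "pideal (g ^ j)"
  have "card ?A = card {x\<in>?A. g * x = 0} * card ((\<lambda>x. g * x) ` ?A)"
    by (rule fiber_card) (auto simp: pideal_diff right_diff_distrib)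
  moreover have "{x\<in>?A. g * x = 0} = pideal (g ^ (s - 1))"
  proof
    show "{x \<in> ?A. g * x = 0} \<subseteq> pideal (g ^ (s - 1))" using ann by blast
    show "pideal (g ^ (s - 1)) \<subseteq> {x \<in> ?A. g * x = 0}"
    proof
      fix x assume x: "x \<in> pideal (g ^ (s - 1))"
      then obtain z where "x = g ^ (s - 1) * z" by (auto simp: pideal_iff)
      then have "g * x = g ^ s * z" unfolding gpow_s by (simp add: mult.assoc)
      then show "x \<in> {x \<in> ?A. g * x = 0}" using gs pideal_pow_mono[OF jm(2) x] by simp
    qed
  qed
  moreover have "(\<lambda>x. g * x) ` ?A = pideal (g ^ (s - m))"
  proof
    show "(\<lambda>x. g * x) ` ?A \<subseteq> pideal (g ^ (s - m))"
      unfolding jm(1)[symmetric] by (auto simp: pideal_iff mult.assoc)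
    show "pideal (g ^ (s - m)) \<subseteq> (\<lambda>x. g * x) ` ?A"
    proof
      fix x assume "x \<in> pideal (g ^ (s - m))"
      then obtain z where "x = g ^ Suc j * z" unfolding jm(1)[symmetric] by (auto simp: pideal_iff)
      then have "x = g * (g ^ j * z)" by (simp add: mult.assoc)
      then show "x \<in> (\<lambda>x. g * x) ` ?A" using pideal_self by blast
    qed
  qed
  ultimately show ?case using Suc top_card jm by (simp add: j_def)
qed

lemma card_UNIV_R: "card (UNIV :: 'a set) = q ^ s"
proof -
  have "pideal (1::'a) = UNIV" by (auto simp: pideal_iff)
  then show ?thesis using ideal_card[of s] by simp
qed

lemma expand_ex: "\<exists>d. (\<forall>i<n. d i < q) \<and> (\<forall>i\<ge>n. d i = 0) \<and>
    x - (\<Sum>i<n. e (d i) * g ^ i) \<in> pideal (g ^ n)"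
proof (induction n arbitrary: x)
  case 0
  show ?case by (rule exI[of _ "\<lambda>_. 0"]) (auto simp: pideal_iff)
next
  case (Suc n)
  obtain i0 where i0: "i0 < q" "x - e i0 \<in> pideal g" using reps[of x] by blast
  then obtain y where y: "x - e i0 = g * y" by (auto simp: pideal_iff)
  obtain d' where d': "\<forall>i<n. d' i < q" "\<forall>i\<ge>n. d' i = 0"
    "y - (\<Sum>i<n. e (d' i) * g ^ i) \<in> pideal (g ^ n)" using Suc.IH[of y] by blast
  obtain z where z: "y - (\<Sum>i<n. e (d' i) * g ^ i) = g ^ n * z" using d'(3) by (auto simp: pideal_iff)
  define d where "d = (\<lambda>i. case i of 0 \<Rightarrow> i0 | Suc j \<Rightarrow> d' j)"
  have "(\<Sum>i<Suc n. e (d i) * g ^ i) = e i0 + g * (\<Sum>i<n. e (d' i) * g ^ i)"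
    unfolding sum_Suc_expand by (simp add: d_def)
  then have "x - (\<Sum>i<Suc n. e (d i) * g ^ i) = g * (y - (\<Sum>i<n. e (d' i) * g ^ i))"
    using y by (simp add: algebra_simps)
  also have "\<dots> = g ^ Suc n * z" using z by (simp add: mult.assoc)
  finally have "x - (\<Sum>i<Suc n. e (d i) * g ^ i) \<in> pideal (g ^ Suc n)" using pideal_self by metis
  moreover have "\<forall>i<Suc n. d i < q" using i0 d' by (auto simp: d_def less_Suc_eq_0_disj)
  moreover have "\<forall>i\<ge>Suc n. d i = 0" using d' by (auto simp: d_def split: nat.split)
  ultimately show ?case by blast
qed

lemma expand_uniq: "n \<le> s \<Longrightarrow> \<forall>i<n. d i < q \<and> d' i < q \<Longrightarrow>
   (\<Sum>i<n. e (d i) * g ^ i) - (\<Sum>i<n. e (d' i) * g ^ i) \<in> pideal (g ^ n) \<Longrightarrow> \<forall>i<n. d i = d' i"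
proof (induction n arbitrary: d d')
  case 0 then show ?case by simp
next
  case (Suc n)
  let ?S = "\<Sum>i<n. e (d (Suc i)) * g ^ i" and ?S' = "\<Sum>i<n. e (d' (Suc i)) * g ^ i"
  obtain z where z: "(e (d 0) + g * ?S) - (e (d' 0) + g * ?S') = g ^ Suc n * z"
    using Suc.prems(3) unfolding sum_Suc_expand by (auto simp: pideal_iff)
  have "e (d 0) - e (d' 0) = g * (g ^ n * z - (?S - ?S'))"
    using z by (simp add: algebra_simps)
  then have "e (d 0) - e (d' 0) \<in> pideal g" using pideal_self by metis
  then have h0: "d 0 = d' 0" using e_inj Suc.prems(2) by blast
  then have "g * (?S - ?S' - g ^ n * z) = 0" using z by (simp add: algebra_simps)
  then have "?S - ?S' - g ^ n * z \<in> pideal (g ^ (s - 1))" by (rule ann)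
  then have "?S - ?S' - g ^ n * z \<in> pideal (g ^ n)"
    using pideal_pow_mono[where g=g and b=n and a="s - 1"] Suc.prems(1) by simp
  then have "?S - ?S' - g ^ n * z + g ^ n * z \<in> pideal (g ^ n)"
    by (rule pideal_add[OF _ pideal_self])
  then have "?S - ?S' \<in> pideal (g ^ n)" by simp
  moreover have "\<forall>i<n. d (Suc i) < q \<and> d' (Suc i) < q" using Suc.prems(2) by simp
  moreover have "n \<le> s" using Suc.prems(1) by simp
  ultimately have "\<forall>i<n. d (Suc i) = d' (Suc i)"
    using Suc.IH[of "\<lambda>i. d (Suc i)" "\<lambda>i. d' (Suc i)"] by blast
  then show ?case using h0 by (auto simp: less_Suc_eq_0_disj)
qed

definition dspec :: "'a \<Rightarrow> (nat \<Rightarrow> nat) \<Rightarrow> bool" where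
  "dspec x d \<longleftrightarrow> (\<forall>i<s. d i < q) \<and> (\<forall>i\<ge>s. d i = 0) \<and> x = (\<Sum>i<s. e (d i) * g ^ i)"

lemma dspec_ex1: "\<exists>!d. dspec x d"
proof -
  obtain d where d: "\<forall>i<s. d i < q" "\<forall>i\<ge>s. d i = 0" "x - (\<Sum>i<s. e (d i) * g ^ i) \<in> pideal (g ^ s)"
    using expand_ex by blast
  have "x - (\<Sum>i<s. e (d i) * g ^ i) = 0" using d(3) gs by (auto simp: pideal_iff)
  then have "dspec x d" using d by (simp add: dspec_def)
  moreover have "d' = d" if "dspec x d'" for d'
  proof
    fix i show "d' i = d i"
    proof (cases "i < s")
      case True
      have "(\<Sum>i<s. e (d' i) * g ^ i) - (\<Sum>i<s. e (d i) * g ^ i) \<in> pideal (g ^ s)"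
        using that \<open>dspec x d\<close> by (simp add: dspec_def pideal_0)
      then show ?thesis using expand_uniq[of s d' d] that d True by (simp add: dspec_def)
    next
      case False then show ?thesis using that d by (simp add: dspec_def)
    qed
  qed
  ultimately show ?thesis by blast
qed

abbreviation "D \<equiv> digits g s q e"

lemma digits_spec: "dspec x (D x)"
proof -
  have "digits g s q e x = (THE d. dspec x d)" unfolding digits_def dspec_def by simp
  then show ?thesis using theI'[OF dspec_ex1[of x]] by simp
qed

lemma digits_hi: "i \<ge> s \<Longrightarrow> D x i = 0"
  using digits_spec[of x] unfolding dspec_def by blast

lemma digits_lt: "i < s \<Longrightarrow> D x i < q"
  using digits_spec[of x] unfolding dspec_def by blast

lemma digits_inj: "D x = D y \<Longrightarrow> x = y"
  using digits_spec[of x] digits_spec[of y] by (simp add: dspec_def)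

abbreviation "rl \<equiv> rless g s q e"

lemma rl_irrefl: "\<not> rl x x"
  by (simp add: rless_def)

lemma lex_trans:
  fixes a b c :: "nat \<Rightarrow> nat"
  assumes i: "i < s" "a i < b i" "\<forall>j. i < j \<and> j < s \<longrightarrow> a j = b j"
    and i': "i' < s" "b i' < c i'" "\<forall>j. i' < j \<and> j < s \<longrightarrow> b j = c j"
  shows "\<exists>k<s. a k < c k \<and> (\<forall>j. k < j \<and> j < s \<longrightarrow> a j = c j)"
proof (cases i i' rule: linorder_cases)
  case less
  have "a i' = b i'" using i(3) less i'(1) by blast
  then have "a i' < c i'" using i'(2) by simp
  moreover have "\<forall>j. i' < j \<and> j < s \<longrightarrow> a j = c j"
  proof (intro allI impI)
    fix j assume j: "i' < j \<and> j < s"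
    then have "a j = b j" using i(3) less by simp
    also have "\<dots> = c j" using i'(3) j by simp
    finally show "a j = c j" .
  qed
  ultimately show ?thesis using i'(1) by blast
next
  case equal
  have "a i' < c i'" using i(2) i'(2) equal by simp
  moreover have "\<forall>j. i' < j \<and> j < s \<longrightarrow> a j = c j"
  proof (intro allI impI)
    fix j assume j: "i' < j \<and> j < s"
    then have "a j = b j" using i(3) equal by simp
    also have "\<dots> = c j" using i'(3) j by simp
    finally show "a j = c j" .
  qed
  ultimately show ?thesis using i'(1) by blast
next
  case greater
  have "b i = c i" using i'(3) greater i(1) by blast
  then have "a i < c i" using i(2) by simp
  moreover have "\<forall>j. i < j \<and> j < s \<longrightarrow> a j = c j"
  proof (intro allI impI)
    fix j assume j: "i < j \<and> j < s"
    then have "a j = b j" using i(3) by simp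
    also have "\<dots> = c j" using i'(3) j greater by simp
    finally show "a j = c j" .
  qed
  ultimately show ?thesis using i(1) by blast
qed

lemma rl_trans: assumes "rl x y" "rl y z" shows "rl x z"
proof -
  obtain i where i: "i < s" "D x i < D y i" "\<forall>j. i < j \<and> j < s \<longrightarrow> D x j = D y j"
    using assms(1) unfolding rless_def by blast
  obtain i' where i': "i' < s" "D y i' < D z i'" "\<forall>j. i' < j \<and> j < s \<longrightarrow> D y j = D z j"
    using assms(2) unfolding rless_def by blast
  show ?thesis unfolding rless_def by (rule lex_trans[OF i i'])
qed

lemma rl_total: assumes "x \<noteq> y" shows "rl x y \<or> rl y x"
proof -
  let ?M = "{i. i < s \<and> D x i \<noteq> D y i}"
  have "?M \<noteq> {}"
  proof
    assume "?M = {}"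
    then have Dxy: "D x i = D y i" for i
      using digits_hi[of i x] digits_hi[of i y] by (cases "i < s") auto
    have "D x = D y" using Dxy by (simp add: fun_eq_iff)
    then show False using digits_inj assms by blast
  qed
  moreover have "finite ?M" by simp
  ultimately have m: "Max ?M \<in> ?M" "\<And>j. j \<in> ?M \<Longrightarrow> j \<le> Max ?M"
    using Max_in[of ?M] Max_ge[of ?M] by blast+
  let ?m = "Max ?M"
  have above: "\<forall>j. ?m < j \<and> j < s \<longrightarrow> D x j = D y j"
  proof (intro allI impI)
    fix j assume j: "?m < j \<and> j < s"
    show "D x j = D y j"
    proof (rule ccontr)
      assume "D x j \<noteq> D y j"
      then have "j \<in> ?M" using j by simp
      then have "j \<le> ?m" by (rule m(2))
      then show False using j by simp
    qed
  qed
  have ms: "?m < s" "D x ?m \<noteq> D y ?m" using m(1) by auto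
  show ?thesis
  proof (cases "D x ?m < D y ?m")
    case True
    have "?m < s \<and> D x ?m < D y ?m \<and> (\<forall>j. ?m < j \<and> j < s \<longrightarrow> D x j = D y j)"
      using ms(1) True above by (intro conjI)
    then have "rl x y" unfolding rless_def by (rule exI[of _ ?m])
    then show ?thesis by (rule disjI1)
  next
    case False
    then have "D y ?m < D x ?m" using ms(2) by simp
    moreover have "\<forall>j. ?m < j \<and> j < s \<longrightarrow> D y j = D x j" using above by metis
    ultimately have "?m < s \<and> D y ?m < D x ?m \<and> (\<forall>j. ?m < j \<and> j < s \<longrightarrow> D y j = D x j)"
      using ms(1) by (intro conjI)
    then have "rl y x" unfolding rless_def by (rule exI[of _ ?m])
    then show ?thesis by (rule disjI2)
  qed
qed

definition rk :: "'a \<Rightarrow> nat" where "rk x = card {y. rl y x}"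

lemma rk_lt: "rk x < q ^ s"
proof -
  have "{y. rl y x} \<subset> UNIV" using rl_irrefl by blast
  then show ?thesis unfolding rk_def card_UNIV_R[symmetric] by (simp add: psubset_card_mono)
qed

lemma rk_mono: "rl x y \<Longrightarrow> rk x < rk y"
proof -
  assume h: "rl x y"
  have "{z. rl z x} \<subset> {z. rl z y}" using rl_trans[OF _ h] rl_irrefl h by blast
  then show ?thesis unfolding rk_def by (simp add: psubset_card_mono)
qed

lemma rk_inj: assumes "rk x = rk y" shows "x = y"
proof (rule ccontr)
  assume "x \<noteq> y"
  then have "rl x y \<or> rl y x" by (rule rl_total)
  then have "rk x < rk y \<or> rk y < rk x" using rk_mono by blast
  then show False using assms by simp
qed

lemma rk_surj: "rk ` UNIV = {..<q ^ s}"
proof (rule card_subset_eq)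
  show "rk ` UNIV \<subseteq> {..<q ^ s}" using rk_lt by auto
  have "inj rk" using rk_inj by (auto intro: injI)
  then show "card (rk ` UNIV) = card {..<q ^ s}" using card_UNIV_R by (simp add: card_image)
qed simp

lemma rho_rk: "n < q ^ s \<Longrightarrow> rk (rho g s q e n) = n"
proof -
  assume n: "n < q ^ s"
  have "n \<in> rk ` UNIV" using rk_surj n by simp
  then obtain x0 where "rk x0 = n" by blast
  then have ex: "\<exists>!x. rk x = n" using rk_inj by blast
  have "rho g s q e n = (THE x. rk x = n)" unfolding rho_def rk_def by simp
  then show ?thesis using theI'[OF ex] by simp
qed

lemma rho_bij: "bij_betw (rho g s q e) {..<q ^ s} UNIV"
proof (rule bij_betw_byWitness[where f'=rk])
  show "\<forall>a\<in>{..<q ^ s}. rk (rho g s q e a) = a" using rho_rk by simp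
  show "\<forall>a'\<in>UNIV. rho g s q e (rk a') = a'" using rho_rk rk_lt rk_inj by simp
  show "rk ` UNIV \<subseteq> {..<q ^ s}" using rk_lt by auto
qed simp

end


context crs
begin

definition col :: "nat \<Rightarrow> nat \<Rightarrow> nat \<Rightarrow> 'a" where
  "col k j = (\<lambda>i. if i < k then Gmat g s q e k i j else 0)"

definition V :: "nat \<Rightarrow> (nat \<Rightarrow> 'a) set" where
  "V k = {v. \<forall>i\<ge>k. v i = 0}"

lemma col_Suc_0: "k \<ge> 1 \<Longrightarrow> col (Suc k) j 0 = rho g s q e (j div (q ^ s) ^ k)"
  by (cases k) (simp_all add: col_def)

lemma col_Suc_Suc: "k \<ge> 1 \<Longrightarrow> col (Suc k) j (Suc i) = col k (j mod (q ^ s) ^ k) i"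
  by (cases k) (simp_all add: col_def)

lemma col_V: "col k j \<in> V k"
  by (simp add: col_def V_def)

lemma rho_inj: "m < q ^ s \<Longrightarrow> m' < q ^ s \<Longrightarrow> rho g s q e m = rho g s q e m' \<Longrightarrow> m = m'"
  using rho_rk by metis

lemma rho_surj: "\<exists>m<q ^ s. rho g s q e m = x"
proof -
  have "x \<in> rho g s q e ` {..<q ^ s}" using rho_bij unfolding bij_betw_def by simp
  then show ?thesis by auto
qed

lemma col_1: "col 1 j 0 = rho g s q e j"
  by (simp add: col_def)

lemma col_bij: "k \<ge> 1 \<Longrightarrow> bij_betw (col k) {..<(q ^ s) ^ k} (V k)"
proof (induction k rule: nat_induct_at_least)
  case base
  show ?case unfolding bij_betw_def
  proof
    show "inj_on (col 1) {..<(q ^ s) ^ 1}"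
    proof (rule inj_onI)
      fix j j' assume jj: "j \<in> {..<(q ^ s) ^ 1}" "j' \<in> {..<(q ^ s) ^ 1}" "col 1 j = col 1 j'"
      have "col 1 j 0 = col 1 j' 0" using jj(3) by simp
      then have "rho g s q e j = rho g s q e j'" by (simp only: col_1)
      then show "j = j'" using rho_inj jj by simp
    qed
    show "col 1 ` {..<(q ^ s) ^ 1} = V 1"
    proof
      show "col 1 ` {..<(q ^ s) ^ 1} \<subseteq> V 1" using col_V by auto
      show "V 1 \<subseteq> col 1 ` {..<(q ^ s) ^ 1}"
      proof
        fix v assume v: "v \<in> V 1"
        obtain m where m: "m < q ^ s" "rho g s q e m = v 0" using rho_surj by blast
        have "col 1 m = v"
        proof
          fix i show "col 1 m i = v i" using v m by (cases i) (auto simp: col_def V_def)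
        qed
        then show "v \<in> col 1 ` {..<(q ^ s) ^ 1}" using m by force
      qed
    qed
  qed
next
  case (Suc k)
  let ?Q = "q ^ s"
  have Qpos: "?Q > 0" using q2 by simp
  have IHi: "inj_on (col k) {..<?Q ^ k}" and IHs: "col k ` {..<?Q ^ k} = V k"
    using Suc.IH unfolding bij_betw_def by auto
  show ?case unfolding bij_betw_def
  proof
    show "inj_on (col (Suc k)) {..<?Q ^ Suc k}"
    proof (rule inj_onI)
      fix j j' assume jj: "j \<in> {..<?Q ^ Suc k}" "j' \<in> {..<?Q ^ Suc k}" "col (Suc k) j = col (Suc k) j'"
      have d: "j div ?Q ^ k < ?Q" "j' div ?Q ^ k < ?Q" using jj(1,2)
        by (auto simp: less_mult_imp_div_less mult.commute)
      have "rho g s q e (j div ?Q ^ k) = rho g s q e (j' div ?Q ^ k)"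
        using fun_cong[OF jj(3), of 0] col_Suc_0[OF Suc.hyps] by simp
      then have h1: "j div ?Q ^ k = j' div ?Q ^ k" using rho_inj d by blast
      have "col k (j mod ?Q ^ k) = col k (j' mod ?Q ^ k)"
      proof
        fix i show "col k (j mod ?Q ^ k) i = col k (j' mod ?Q ^ k) i"
          using fun_cong[OF jj(3), of "Suc i"] col_Suc_Suc[OF Suc.hyps] by simp
      qed
      moreover have "j mod ?Q ^ k < ?Q ^ k" "j' mod ?Q ^ k < ?Q ^ k" using Qpos by simp_all
      ultimately have h2: "j mod ?Q ^ k = j' mod ?Q ^ k" using IHi by (simp add: inj_on_def)
      show "j = j'" using h1 h2 by (metis div_mult_mod_eq)
    qed
    show "col (Suc k) ` {..<?Q ^ Suc k} = V (Suc k)"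
    proof
      show "col (Suc k) ` {..<?Q ^ Suc k} \<subseteq> V (Suc k)" using col_V by auto
      show "V (Suc k) \<subseteq> col (Suc k) ` {..<?Q ^ Suc k}"
      proof
        fix v assume v: "v \<in> V (Suc k)"
        have "(\<lambda>i. v (Suc i)) \<in> V k" using v by (simp add: V_def)
        then have "(\<lambda>i. v (Suc i)) \<in> col k ` {..<?Q ^ k}" using IHs by simp
        then obtain r where r: "r < ?Q ^ k" "col k r = (\<lambda>i. v (Suc i))"
          by (metis (no_types, lifting) imageE lessThan_iff)
        obtain m where m: "m < ?Q" "rho g s q e m = v 0" using rho_surj by blast
        define j where "j = m * ?Q ^ k + r"
        have jdiv: "j div ?Q ^ k = m" and jmod: "j mod ?Q ^ k = r"
        proof -
          have Qk: "?Q ^ k > 0" using Qpos by simp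
          have "j div ?Q ^ k = m + r div ?Q ^ k" unfolding j_def
            by (rule div_mult_self3) (use Qk in simp)
          then show "j div ?Q ^ k = m" using r(1) by simp
          show "j mod ?Q ^ k = r" using r(1) unfolding j_def by simp
        qed
        have "j < ?Q ^ Suc k"
        proof -
          have "j < m * ?Q ^ k + ?Q ^ k" using r(1) by (simp add: j_def)
          also have "\<dots> = (m + 1) * ?Q ^ k" by simp
          also have "\<dots> \<le> ?Q * ?Q ^ k" using m(1) by (intro mult_right_mono) simp_all
          finally show ?thesis by simp
        qed
        moreover have "col (Suc k) j = v"
        proof
          fix i show "col (Suc k) j i = v i"
          proof (cases i)
            case 0 then show ?thesis using col_Suc_0[OF Suc.hyps] jdiv m by simp
          next
            case (Suc i') then show ?thesis using col_Suc_Suc[OF Suc.hyps] jmod r(2) fun_cong[OF r(2), of i'] by simp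
          qed
        qed
        ultimately show "v \<in> col (Suc k) ` {..<?Q ^ Suc k}" by force
      qed
    qed
  qed
qed

lemma ideal_class:
  assumes I: "is_ideal I" and z0: "z0 \<in> I" "z0 \<noteq> 0"
  shows "\<exists>t<s. I = pideal (g ^ t)"
proof -
  let ?T = "{t. \<exists>x\<in>I. x \<noteq> 0 \<and> (\<exists>u. u dvd 1 \<and> x = g ^ t * u)}"
  obtain t1 u1 where "t1 < s" "u1 dvd 1" "z0 = g ^ t1 * u1" using factor[OF z0(2)] by blast
  then have "t1 \<in> ?T" using z0 by blast
  define t0 where "t0 = (LEAST t. t \<in> ?T)"
  have "t0 \<in> ?T" unfolding t0_def by (rule LeastI) fact
  then obtain x u where x: "x \<in> I" "x \<noteq> 0" "u dvd 1" "x = g ^ t0 * u" by blast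
  obtain v where v: "1 = u * v" using x(3) by (auto simp: dvd_def)
  have "v * x = (u * v) * g ^ t0" using x(4) by (simp add: mult_ac)
  then have "g ^ t0 = v * x" using v by simp
  then have gI: "g ^ t0 \<in> I" using I x(1) unfolding is_ideal_def by metis
  have "t0 < s"
  proof (rule ccontr)
    assume "\<not> t0 < s"
    then have "g ^ t0 = g ^ s * g ^ (t0 - s)" by (simp flip: power_add)
    then have "g ^ t0 = 0" using gs by simp
    then show False using x by simp
  qed
  moreover have "I = pideal (g ^ t0)"
  proof
    show "pideal (g ^ t0) \<subseteq> I"
    proof
      fix y assume "y \<in> pideal (g ^ t0)"
      then obtain z where "y = g ^ t0 * z" by (auto simp: pideal_iff)
      then have "y = z * g ^ t0" by (simp add: mult.commute)
      then show "y \<in> I" using I gI unfolding is_ideal_def by metis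
    qed
    show "I \<subseteq> pideal (g ^ t0)"
    proof
      fix y assume y: "y \<in> I"
      show "y \<in> pideal (g ^ t0)"
      proof (cases "y = 0")
        case True then show ?thesis by (simp add: pideal_0)
      next
        case False
        obtain t' u' where tu: "t' < s" "u' dvd 1" "y = g ^ t' * u'" using factor[OF False] by blast
        then have "t' \<in> ?T" using y False by blast
        then have "t0 \<le> t'" unfolding t0_def by (rule Least_le)
        then have "y = g ^ t0 * (g ^ (t' - t0) * u')" using tu(3)
          by (simp add: mult.assoc[symmetric] power_add[symmetric])
        then show ?thesis using pideal_self by metis
      qed
    qed
  qed
  ultimately show ?thesis by blast
qed

lemma wsum:
  assumes t: "t < s"
  shows "(\<Sum>z\<in>pideal (g ^ t). wHom g s q z) = ((q - 1) * q ^ (s - 2)) * (q ^ (s - t) - q) + q ^ (s - 1) * (q - 1)"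
proof -
  let ?I = "pideal (g ^ t)" and ?P = "pideal (g ^ (s - 1))"
  have PI: "?P \<subseteq> ?I" using pideal_pow_mono[where g=g and b=t and a="s - 1"] t by auto
  have cI: "card ?I = q ^ (s - t)" using ideal_card[of "s - t"] t by simp
  have "(\<Sum>z\<in>?I. wHom g s q z) = (\<Sum>z\<in>?I - ?P. wHom g s q z) + (\<Sum>z\<in>?P. wHom g s q z)"
    by (rule sum.subset_diff[OF PI]) simp
  also have "(\<Sum>z\<in>?I - ?P. wHom g s q z) = (\<Sum>z\<in>?I - ?P. (q - 1) * q ^ (s - 2))"
  proof (rule sum.cong)
    fix z assume "z \<in> ?I - ?P"
    moreover then have "z \<noteq> 0" using pideal_0 by auto
    ultimately show "wHom g s q z = (q - 1) * q ^ (s - 2)" by (simp add: wHom_def)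
  qed simp
  also have "\<dots> = (q - 1) * q ^ (s - 2) * (q ^ (s - t) - q)"
    using PI cI top_card by (simp add: card_Diff_subset)
  also have "(\<Sum>z\<in>?P. wHom g s q z) = (\<Sum>z\<in>?P - {0}. wHom g s q z) + (\<Sum>z\<in>{0}. wHom g s q z)"
    by (rule sum.subset_diff) (simp_all add: pideal_0)
  also have "(\<Sum>z\<in>?P - {0}. wHom g s q z) = (\<Sum>z\<in>?P - {0}. q ^ (s - 1))"
    by (rule sum.cong) (auto simp: wHom_def)
  also have "\<dots> = q ^ (s - 1) * (q - 1)"
    using top_card by (simp add: card_Diff_subset pideal_0)
  finally show ?thesis by (simp add: wHom_def)
qed

end


lemma arith_final:
  fixes K n q s t k :: nat
  assumes Kn: "K * n = q ^ (s * k)" and n: "n = q ^ (s - t)" and t: "t < s" and k: "k \<ge> 1" and q: "q \<ge> 2"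
  shows "K * ((q - 1) * q ^ (s - 2) * (n - q) + q ^ (s - 1) * (q - 1)) = q ^ (s * (k + 1) - 2) * (q - 1)"
proof (cases "s = 1")
  case True
  then have "t = 0" using t by simp
  then have "n = q" using n True by simp
  have "K * q = q ^ (k - 1) * q" using Kn \<open>n = q\<close> True k by (simp flip: power_Suc2)
  then have "K = q ^ (k - 1)" using q by simp
  moreover have "s * (k + 1) - 2 = k - 1" using True by simp
  ultimately show ?thesis using True \<open>n = q\<close> by simp
next
  case False
  then have s2: "s \<ge> 2" using t by simp
  define c where "c = (q - 1) * q ^ (s - 2)"
  have nq: "n \<ge> q" using n t q
    by (metis Suc_leI le_add_diff_inverse2 power_increasing zero_less_diff One_nat_def power_one_right
        le_trans less_imp_le_nat one_le_numeral)
  have "q ^ (s - 1) = q ^ (s - 2) * q" using s2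
    by (metis Suc_diff_Suc Suc_1 diff_Suc_1 less_le_trans lessI power_Suc2)
  then have "q ^ (s - 1) * (q - 1) = c * q" by (simp add: c_def mult_ac)
  then have "(q - 1) * q ^ (s - 2) * (n - q) + q ^ (s - 1) * (q - 1) = c * (n - q + q)"
    by (simp add: c_def add_mult_distrib2)
  also have "\<dots> = c * n" using nq by simp
  finally have "K * ((q - 1) * q ^ (s - 2) * (n - q) + q ^ (s - 1) * (q - 1)) = c * (K * n)"
    by (simp add: mult_ac)
  also have "\<dots> = (q - 1) * q ^ (s - 2 + s * k)" using Kn by (simp add: c_def power_add)
  also have "s - 2 + s * k = s * (k + 1) - 2" using s2 by (simp add: algebra_simps)
  finally show ?thesis by (simp add: mult_ac)
qed

context crs
begin

lemma main_sum:
  assumes k: "k \<ge> 1" and nz: "\<exists>j<(q ^ s) ^ k. (\<Sum>i<k. a i * Gmat g s q e k i j) \<noteq> 0"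
  shows "(\<Sum>j<(q ^ s) ^ k. wHom g s q (\<Sum>i<k. a i * Gmat g s q e k i j)) = q ^ (s * (k + 1) - 2) * (q - 1)"
proof -
  define f where "f = (\<lambda>v::nat \<Rightarrow> 'a. \<Sum>i<k. a i * v i)"
  have eq: "(\<Sum>i<k. a i * Gmat g s q e k i j) = f (col k j)" for j
    unfolding f_def col_def by (rule sum.cong) auto
  have bij: "bij_betw (col k) {..<(q ^ s) ^ k} (V k)" by (rule col_bij[OF k])
  have Vimg: "V k = col k ` {..<(q ^ s) ^ k}" using bij by (simp add: bij_betw_def)
  have finV: "finite (V k)" using Vimg by simp
  have cardV: "card (V k) = q ^ (s * k)" using bij_betw_same_card[OF bij] by (simp add: power_mult)
  have cl: "v - w \<in> V k" if "v \<in> V k" "w \<in> V k" for v w using that by (simp add: V_def)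
  have hom: "f (v - w) = f v - f w" if "v \<in> V k" "w \<in> V k" for v w
    unfolding f_def by (simp add: right_diff_distrib sum_subtractf)
  have "(\<Sum>j<(q ^ s) ^ k. wHom g s q (\<Sum>i<k. a i * Gmat g s q e k i j))
      = (\<Sum>j<(q ^ s) ^ k. wHom g s q (f (col k j)))" by (simp add: eq)
  also have "\<dots> = (\<Sum>v\<in>V k. wHom g s q (f v))"
    by (rule sum.reindex_bij_betw[OF bij])
  also have "\<dots> = card {v\<in>V k. f v = 0} * sum (wHom g s q) (f ` V k)"
    by (rule fiber_sum[where A="V k" and \<phi>=f]) (simp_all add: finV cl hom)
  finally have S: "(\<Sum>j<(q ^ s) ^ k. wHom g s q (\<Sum>i<k. a i * Gmat g s q e k i j))
      = card {v\<in>V k. f v = 0} * sum (wHom g s q) (f ` V k)" .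
  have C: "card (V k) = card {v\<in>V k. f v = 0} * card (f ` V k)"
    by (rule fiber_card[where A="V k" and \<phi>=f]) (simp_all add: finV cl hom)
  have idl: "is_ideal (f ` V k)"
    unfolding is_ideal_def
  proof (intro conjI ballI allI)
    have "(0::nat\<Rightarrow>'a) \<in> V k" by (simp add: V_def)
    moreover have "f 0 = 0" by (simp add: f_def)
    ultimately show "0 \<in> f ` V k" by force
  next
    fix x y assume "x \<in> f ` V k" "y \<in> f ` V k"
    then obtain v w where vw: "v \<in> V k" "w \<in> V k" "x = f v" "y = f w" by blast
    have "v + w \<in> V k" using vw by (simp add: V_def)
    moreover have "f (v + w) = x + y" using vw by (simp add: f_def distrib_left sum.distrib)
    ultimately show "x + y \<in> f ` V k" by force
  next
    fix r x assume "x \<in> f ` V k"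
    then obtain v where v: "v \<in> V k" "x = f v" by blast
    have "(\<lambda>i. r * v i) \<in> V k" using v by (simp add: V_def)
    moreover have "f (\<lambda>i. r * v i) = r * x" using v by (simp add: f_def sum_distrib_left mult_ac)
    ultimately show "r * x \<in> f ` V k" by force
  qed
  obtain j0 where j0: "j0 < (q ^ s) ^ k" "(\<Sum>i<k. a i * Gmat g s q e k i j0) \<noteq> 0" using nz by blast
  have "f (col k j0) \<in> f ` V k" using col_V by blast
  moreover have "f (col k j0) \<noteq> 0" using j0 eq by simp
  ultimately obtain t where t: "t < s" "f ` V k = pideal (g ^ t)" using ideal_class[OF idl] by blast
  have cI: "card (f ` V k) = q ^ (s - t)" using t ideal_card[of "s - t"] by simp
  show ?thesis
    unfolding S t(2) wsum[OF t(1)]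
    by (rule arith_final[OF _ _ t(1) k q2]) (use C cardV cI t(2) in simp_all)
qed

end

theorem proposition3p14:
  fixes g :: "'a::{comm_ring_1,finite}" and s q k :: nat and e :: "nat \<Rightarrow> 'a" and c :: "'a list"
  assumes "chain_ring_setup g s q e"
    and "k \<ge> 1"
    and "c \<in> Scode g s q e k"
    and "c \<noteq> replicate (q ^ (s * k)) 0"
  shows "wHom_vec g s q c = q ^ (s * (k + 1) - 2) * (q - 1)"
proof -
  interpret crs g s q e by (rule crs.intro) (rule assms(1))
  obtain a where c: "c = map (\<lambda>j. \<Sum>i<k. a i * Gmat g s q e k i j) [0..<q ^ (s * k)]"
    using assms(3) unfolding Scode_def by blast
  have nz: "\<exists>j<(q ^ s) ^ k. (\<Sum>i<k. a i * Gmat g s q e k i j) \<noteq> 0"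
  proof (rule ccontr)
    assume "\<not> ?thesis"
    then have "c = replicate (q ^ (s * k)) 0" unfolding c
      by (simp add: list_eq_iff_nth_eq power_mult)
    then show False using assms(4) by simp
  qed
  have "wHom_vec g s q c = (\<Sum>j\<in>{0..<q ^ (s * k)}. wHom g s q (\<Sum>i<k. a i * Gmat g s q e k i j))"
    unfolding wHom_vec_def c by (simp add: sum_set_upt_conv_sum_list_nat[symmetric] comp_def)
  also have "\<dots> = (\<Sum>j<(q ^ s) ^ k. wHom g s q (\<Sum>i<k. a i * Gmat g s q e k i j))"
    by (simp add: power_mult atLeast0LessThan)
  also have "\<dots> = q ^ (s * (k + 1) - 2) * (q - 1)" by (rule main_sum[OF assms(2) nz])
  finally show ?thesis .
qed

end
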